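(* Let $A>0$, $B\in\mathbb{R}$, $R\ge0$, and let $q_0=q_{0,R}$, where $q_{0,R}(x)=0$ for $x\le R$ and $q_{0,R}(x)=Ae^{2\mathrm{i} Bx}$ for $x>R$. Then the associated spectral functions are $$a_1(k)=1+\frac{A^2e^{4\mathrm{i} kR}}{4(k^2-B^2)},\qquad a_2(k)=1,\qquad b(k)=\frac{-\mathrm{i} Ae^{2\mathrm{i} R(k-B)}}{2(k-B)}.$$
   Context: Notation: $\sigma_3=\mathrm{diag}(1,-1)$, $X^{(i)}$ is the $i$-th column of $X$, $\mathbb{C}^\pm=\{\pm\mathrm{Im}\,k>0\}$. Let $U(x)=\begin{pmatrix}0&q_0(x)\\-\overline{q_0(-x)}&0\end{pmatrix}$, $U_+(x)=\begin{pmatrix}0&Ae^{2\mathrm{i} Bx}\\0&0\end{pmatrix}$, $U_-(x)=\begin{pmatrix}0&0\\-Ae^{2\mathrm{i} Bx}&0\end{pmatrix}$, $N_+(k)=\begin{pmatrix}1&\frac{-\mathrm{i} A}{2(k+B)}\\0&1\end{pmatrix}$, $N_-(k)=\begin{pmatrix}1&0\\\frac{-\mathrm{i} A}{2(k-B)}&1\end{pmatrix}$, $\Phi_\pm(x,k)=e^{\pm\mathrm{i} Bx\sigma_3}N_\pm(k)e^{-\mathrm{i}(k\pm B)x\sigma_3}$, $G_\pm(x,y,k)=\Phi_\pm(x,k)\Phi_\pm^{-1}(y,k)$. Let $\Psi_1,\Psi_2$ solve $\Psi_1(x,k)=e^{-\mathrm{i} Bx\sigma_3}N_-(k)+\int_{-\infty}^xG_-(x,y,k)(U-U_-)(y)\Psi_1(y,k)e^{\mathrm{i}(k-B)(x-y)\sigma_3}dy$,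 $\Psi_2(x,k)=e^{\mathrm{i} Bx\sigma_3}N_+(k)-\int_x^\infty G_+(x,y,k)(U-U_+)(y)\Psi_2(y,k)e^{\mathrm{i}(k+B)(x-y)\sigma_3}dy$. The spectral functions are $a_1(k)=\det(\Psi_1^{(1)}(0,k),\Psi_2^{(2)}(0,k))$, $a_2(k)=\det(\Psi_2^{(1)}(0,k),\Psi_1^{(2)}(0,k))$, $b(k)=\det(\Psi_2^{(1)}(0,k),\Psi_1^{(1)}(0,k))$ (on their natural domains, $k\in\overline{\mathbb{C}^+}\setminus\{\pm B\}$, $k\in\overline{\mathbb{C}^-}$, $k\in\mathbb{R}\setminus\{B\}$ respectively). *)

theory Defs
  imports "HOL-Analysis.Analysis"
begin

type_synonym cmat = "complex^2^2"

definition mat2 :: "complex \<Rightarrow> complex \<Rightarrow> complex \<Rightarrow> complex \<Rightarrow> cmat" where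
  "mat2 a b c d = vector [vector [a, b], vector [c, d]]"

definition exp_i_sigma3 :: "complex \<Rightarrow> cmat" where
  "exp_i_sigma3 t = mat2 (exp (\<i> * t)) 0 0 (exp (- \<i> * t))"

definition q0R :: "real \<Rightarrow> real \<Rightarrow> real \<Rightarrow> real \<Rightarrow> complex" where
  "q0R A B R x = (if x \<le> R then 0 else of_real A * exp (2 * \<i> * of_real B * of_real x))"

definition Umat :: "(real \<Rightarrow> complex) \<Rightarrow> real \<Rightarrow> cmat" where
  "Umat q x = mat2 0 (q x) (- cnj (q (- x))) 0"

definition Uplus :: "real \<Rightarrow> real \<Rightarrow> real \<Rightarrow> cmat" where
  "Uplus A B x = mat2 0 (of_real A * exp (2 * \<i> * of_real B * of_real x)) 0 0"

definition Uminus :: "real \<Rightarrow> real \<Rightarrow> real \<Rightarrow> cmat" where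
  "Uminus A B x = mat2 0 0 (- of_real A * exp (2 * \<i> * of_real B * of_real x)) 0"

definition Nplus :: "real \<Rightarrow> real \<Rightarrow> complex \<Rightarrow> cmat" where
  "Nplus A B k = mat2 1 (- \<i> * of_real A / (2 * (k + of_real B))) 0 1"

definition Nminus :: "real \<Rightarrow> real \<Rightarrow> complex \<Rightarrow> cmat" where
  "Nminus A B k = mat2 1 0 (- \<i> * of_real A / (2 * (k - of_real B))) 1"

definition Phiplus :: "real \<Rightarrow> real \<Rightarrow> real \<Rightarrow> complex \<Rightarrow> cmat" where
  "Phiplus A B x k = exp_i_sigma3 (of_real B * of_real x) ** Nplus A B k
     ** exp_i_sigma3 (- (k + of_real B) * of_real x)"

definition Phiminus :: "real \<Rightarrow> real \<Rightarrow> real \<Rightarrow> complex \<Rightarrow> cmat" where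
  "Phiminus A B x k = exp_i_sigma3 (- of_real B * of_real x) ** Nminus A B k
     ** exp_i_sigma3 (- (k - of_real B) * of_real x)"

definition Gplus :: "real \<Rightarrow> real \<Rightarrow> real \<Rightarrow> real \<Rightarrow> complex \<Rightarrow> cmat" where
  "Gplus A B x y k = Phiplus A B x k ** matrix_inv (Phiplus A B y k)"

definition Gminus :: "real \<Rightarrow> real \<Rightarrow> real \<Rightarrow> real \<Rightarrow> complex \<Rightarrow> cmat" where
  "Gminus A B x y k = Phiminus A B x k ** matrix_inv (Phiminus A B y k)"

definition solves_Psi1 :: "(real \<Rightarrow> complex) \<Rightarrow> real \<Rightarrow> real \<Rightarrow> complex \<Rightarrow> (real \<Rightarrow> cmat) \<Rightarrow> bool" where
  "solves_Psi1 q A B k Psi \<longleftrightarrow> (\<forall>x::real. \<exists>I.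
     ((\<lambda>y. Gminus A B x y k ** (Umat q y - Uminus A B y) ** Psi y
           ** exp_i_sigma3 ((k - of_real B) * of_real (x - y))) has_integral I) {..x}
     \<and> Psi x = exp_i_sigma3 (- of_real B * of_real x) ** Nminus A B k + I)"

definition solves_Psi2 :: "(real \<Rightarrow> complex) \<Rightarrow> real \<Rightarrow> real \<Rightarrow> complex \<Rightarrow> (real \<Rightarrow> cmat) \<Rightarrow> bool" where
  "solves_Psi2 q A B k Psi \<longleftrightarrow> (\<forall>x::real. \<exists>I.
     ((\<lambda>y. Gplus A B x y k ** (Umat q y - Uplus A B y) ** Psi y
           ** exp_i_sigma3 ((k + of_real B) * of_real (x - y))) has_integral I) {x..}
     \<and> Psi x = exp_i_sigma3 (of_real B * of_real x) ** Nplus A B k - I)"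

definition det_cols :: "complex^2 \<Rightarrow> complex^2 \<Rightarrow> complex" where
  "det_cols u v = det (\<chi> i j. if j = 1 then u $ i else v $ i)"

definition a1 :: "cmat \<Rightarrow> cmat \<Rightarrow> complex" where
  "a1 P1 P2 = det_cols (column 1 P1) (column 2 P2)"

definition a2 :: "cmat \<Rightarrow> cmat \<Rightarrow> complex" where
  "a2 P1 P2 = det_cols (column 1 P2) (column 2 P1)"

definition bfun :: "cmat \<Rightarrow> cmat \<Rightarrow> complex" where
  "bfun P1 P2 = det_cols (column 1 P2) (column 1 P1)"

end

theory Submission imports Defs begin

lemma mat2_nth[simp]:
  "mat2 a b c d $ 1 $ 1 = a" "mat2 a b c d $ 1 $ 2 = b"
  "mat2 a b c d $ 2 $ 1 = c" "mat2 a b c d $ 2 $ 2 = d"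
  by (simp_all add: mat2_def)

lemma cmat_eq_iff: "(M::cmat) = N \<longleftrightarrow> M$1$1 = N$1$1 \<and> M$1$2 = N$1$2 \<and> M$2$1 = N$2$1 \<and> M$2$2 = N$2$2"
  by (auto simp: vec_eq_iff forall_2)

lemma mat2_eta: "(M::cmat) = mat2 (M$1$1) (M$1$2) (M$2$1) (M$2$2)"
  by (simp add: cmat_eq_iff)

lemma mat2_mult: "mat2 a b c d ** mat2 e f g h = mat2 (a*e+b*g) (a*f+b*h) (c*e+d*g) (c*f+d*h)"
  by (simp add: cmat_eq_iff matrix_matrix_mult_def sum_2)

lemma mat2_diff: "mat2 a b c d - mat2 e f g h = mat2 (a-e) (b-f) (c-g) (d-h)"
  by (simp add: cmat_eq_iff)
lemma mat2_add: "mat2 a b c d + mat2 e f g h = mat2 (a+e) (b+f) (c+g) (d+h)"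
  by (simp add: cmat_eq_iff)
lemma mat2_one: "mat 1 = mat2 1 0 0 1"
  by (simp add: cmat_eq_iff mat_def)

lemma matrix_inv_eqI:
  fixes A B :: cmat
  assumes "A ** B = mat 1" "B ** A = mat 1"
  shows "matrix_inv A = B"
proof -
  have ex: "\<exists>A'. A ** A' = mat 1 \<and> A' ** A = mat 1" using assms by blast
  define C where "C = matrix_inv A"
  have C: "A ** C = mat 1 \<and> C ** A = mat 1"
    unfolding C_def matrix_inv_def by (rule someI_ex[OF ex])
  have "C = C ** (A ** B)" by (simp add: assms)
  also have "\<dots> = (C ** A) ** B" by (simp add: matrix_mul_assoc)
  also have "\<dots> = B" using C by simp
  finally show ?thesis unfolding C_def .
qed

lemma matrix_inv_mat2:
  assumes "a*d - b*c = 1"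
  shows "matrix_inv (mat2 a b c d) = mat2 d (-b) (-c) a"
  apply (rule matrix_inv_eqI)
  using assms by (simp_all add: mat2_mult mat2_one algebra_simps)

lemma det_cols_eq: "det_cols u v = u$1 * v$2 - v$1 * u$2"
  by (simp add: det_cols_def det_2)

lemma column_nth[simp]: "column j M $ i = M $ i $ j"
  by (simp add: column_def)


lemma exp_i_sigma3_eq: "exp_i_sigma3 t = mat2 (exp (\<i>*t)) 0 0 (exp (-\<i>*t))"
  by (simp add: exp_i_sigma3_def)

lemma Phiminus_eq:
  "Phiminus A B x k = mat2 (exp (-\<i>*k*x)) 0
     (- \<i> * of_real A / (2 * (k - of_real B)) * exp (\<i>*(2*B-k)*x)) (exp (\<i>*k*x))"
  unfolding Phiminus_def exp_i_sigma3_eq Nminus_def mat2_mult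
  apply (simp add: cmat_eq_iff)
  apply (simp add: algebra_simps flip: exp_add)
  done

lemma Phiplus_eq:
  "Phiplus A B x k = mat2 (exp (-\<i>*k*x))
     (- \<i> * of_real A / (2 * (k + of_real B)) * exp (\<i>*(2*B+k)*x)) 0 (exp (\<i>*k*x))"
  unfolding Phiplus_def exp_i_sigma3_eq Nplus_def mat2_mult
  apply (simp add: cmat_eq_iff)
  apply (simp add: algebra_simps flip: exp_add)
  done


lemma Gminus_form: "\<exists>g11 g21. Gminus A B x z k = mat2 g11 0 g21 (exp (\<i>*k*(x-z)))"
proof -
  have d: "exp (-\<i>*k*z) * exp (\<i>*k*z) - 0 * c = 1" for c
    by (simp flip: exp_add)
  show ?thesis
    unfolding Gminus_def Phiminus_eq[of A B z] matrix_inv_mat2[OF d]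
    unfolding Phiminus_eq mat2_mult
    by (auto simp: algebra_simps right_diff_distrib simp flip: exp_add)
qed

lemma Gplus_form: "\<exists>g12 g22. Gplus A B x z k = mat2 (exp (-\<i>*k*(x-z))) g12 0 g22"
proof -
  have d: "exp (-\<i>*k*z) * exp (\<i>*k*z) - c * 0 = 1" for c
    by (simp flip: exp_add)
  show ?thesis
    unfolding Gplus_def Phiplus_eq[of A B z] matrix_inv_mat2[OF d]
    unfolding Phiplus_eq mat2_mult
    by (auto simp: algebra_simps right_diff_distrib simp flip: exp_add)
qed

lemma integral_entry_zero:
  assumes "(g has_integral I) S" "\<And>z. z \<in> S \<Longrightarrow> (g z :: cmat) $ i $ j = 0"
  shows "I $ i $ j = 0"
proof -
  have bl: "bounded_linear (\<lambda>M::cmat. M $ i $ j)"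
    by (rule bounded_linear_compose[OF bounded_linear_vec_nth bounded_linear_vec_nth])
  have "((\<lambda>z. g z $ i $ j) has_integral I $ i $ j) S"
    using has_integral_linear[OF assms(1) bl] by (simp add: o_def)
  moreover have "((\<lambda>z. g z $ i $ j) has_integral 0) S"
    by (rule has_integral_eq[OF _ has_integral_0]) (use assms(2) in auto)
  ultimately show ?thesis using has_integral_unique by blast
qed


lemma exp_integral:
  fixes a b :: real and c :: complex
  assumes "a \<le> b" "c \<noteq> 0"
  shows "((\<lambda>z. exp (c * of_real z)) has_integral (exp (c * of_real b) - exp (c * of_real a)) / c) {a..b}"
proof -
  have "((\<lambda>z. exp (c * of_real z) / c) has_vector_derivative exp (c * of_real x)) (at x within {a..b})" for x
  proof -
    have "((\<lambda>w. exp (c * w) / c) has_field_derivative exp (c * of_real x)) (at (of_real x))"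
      using assms(2) by (auto intro!: derivative_eq_intros)
    then show ?thesis by (rule has_vector_derivative_real_field)
  qed
  from fundamental_theorem_of_calculus[OF assms(1) this]
  show ?thesis by (simp add: diff_divide_distrib)
qed

lemma M1_form:
  assumes "z \<le> R"
  shows "Umat (q0R A B R) z - Uminus A B z =
    mat2 0 0 (- cnj (q0R A B R (- z)) + of_real A * exp (2 * \<i> * of_real B * of_real z)) 0"
  using assms by (simp add: Umat_def Uminus_def mat2_diff q0R_def)

lemma M2_form:
  assumes "z \<ge> - R"
  shows "Umat (q0R A B R) z - Uplus A B z =
    mat2 0 (q0R A B R z - of_real A * exp (2 * \<i> * of_real B * of_real z)) 0 0"
  using assms by (simp add: Umat_def Uplus_def mat2_diff q0R_def)

lemma integrand1:
  assumes "z \<le> R"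
  shows "Gminus A B x z k ** (Umat (q0R A B R) z - Uminus A B z) ** P ** exp_i_sigma3 t =
    mat2 0 0 (exp (\<i>*k*(x-z)) * (- cnj (q0R A B R (- z)) + of_real A * exp (2 * \<i> * of_real B * of_real z)) * P$1$1 * exp (\<i>*t))
      (exp (\<i>*k*(x-z)) * (- cnj (q0R A B R (- z)) + of_real A * exp (2 * \<i> * of_real B * of_real z)) * P$1$2 * exp (-\<i>*t))"
proof -
  obtain g11 g21 where g: "Gminus A B x z k = mat2 g11 0 g21 (exp (\<i>*k*(x-z)))"
    using Gminus_form by blast
  show ?thesis
    unfolding g M1_form[OF assms] exp_i_sigma3_eq
    by (subst (1) mat2_eta[of P]) (simp add: mat2_mult)
qed

lemma integrand2:
  assumes "z \<ge> - R"
  shows "Gplus A B x z k ** (Umat (q0R A B R) z - Uplus A B z) ** P ** exp_i_sigma3 t =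
    mat2 (exp (-\<i>*k*(x-z)) * (q0R A B R z - of_real A * exp (2 * \<i> * of_real B * of_real z)) * P$2$1 * exp (\<i>*t))
      (exp (-\<i>*k*(x-z)) * (q0R A B R z - of_real A * exp (2 * \<i> * of_real B * of_real z)) * P$2$2 * exp (-\<i>*t)) 0 0"
proof -
  obtain g12 g22 where g: "Gplus A B x z k = mat2 (exp (-\<i>*k*(x-z))) g12 0 g22"
    using Gplus_form by blast
  show ?thesis
    unfolding g M2_form[OF assms] exp_i_sigma3_eq
    by (subst (1) mat2_eta[of P]) (simp add: mat2_mult)
qed


lemma alg1:
  fixes a E s :: complex assumes "s \<noteq> 0"
  shows "- \<i> * a / (2 * s) + a * ((1 - E) / (-2 * \<i> * s)) = - \<i> * a * E / (2 * s)"
  using assms by (simp add: field_simps)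

lemma Psi1_vals:
  assumes R: "R \<ge> 0" and kB: "k \<noteq> of_real B"
    and sol: "solves_Psi1 (q0R A B R) A B k Psi"
  shows "Psi 0 $ 1 $ 1 = 1" "Psi 0 $ 1 $ 2 = 0" "Psi 0 $ 2 $ 2 = 1"
    "Psi 0 $ 2 $ 1 = - \<i> * of_real A * exp (2 * \<i> * of_real R * (k - of_real B)) / (2 * (k - of_real B))"
proof -
  let ?g = "\<lambda>x y. Gminus A B x y k ** (Umat (q0R A B R) y - Uminus A B y) ** Psi y
           ** exp_i_sigma3 ((k - of_real B) * of_real (x - y))"
  have row1: "Psi x $ 1 $ 1 = exp (\<i> * (- of_real B * of_real x)) \<and> Psi x $ 1 $ 2 = 0" if "x \<le> R" for x
  proof -
    obtain I where I: "(?g x has_integral I) {..x}"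
      and eq: "Psi x = exp_i_sigma3 (- of_real B * of_real x) ** Nminus A B k + I"
      using sol unfolding solves_Psi1_def by blast
    have "I $ 1 $ 1 = 0" "I $ 1 $ 2 = 0"
      using that by (auto intro!: integral_entry_zero[OF I] simp: integrand1)
    then show ?thesis
      unfolding eq by (simp add: exp_i_sigma3_eq Nminus_def mat2_mult)
  qed
  obtain I where I: "(?g 0 has_integral I) {..0}"
    and eq: "Psi 0 = exp_i_sigma3 (- of_real B * of_real 0) ** Nminus A B k + I"
    using sol unfolding solves_Psi1_def by blast
  have I22: "I $ 2 $ 2 = 0"
    using R row1 by (auto intro!: integral_entry_zero[OF I] simp: integrand1)
  define c where "c = -2 * \<i> * (k - of_real B)"
  have c0: "c \<noteq> 0" using kB by (simp add: c_def)
  have bl: "bounded_linear (\<lambda>M::cmat. M $ 2 $ 1)"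
    by (rule bounded_linear_compose[OF bounded_linear_vec_nth bounded_linear_vec_nth])
  have I21a: "((\<lambda>z. ?g 0 z $ 2 $ 1) has_integral I $ 2 $ 1) {..0}"
    using has_integral_linear[OF I bl] by (simp add: o_def)
  have J: "((\<lambda>z. of_real A * exp (c * of_real z)) has_integral
       of_real A * ((exp (c * of_real 0) - exp (c * of_real (-R))) / c)) {-R..0}"
    using has_integral_mult_right[OF exp_integral[OF _ c0, of "-R" 0]] R by simp
  have J2: "((\<lambda>z. if z \<in> {-R..0} then of_real A * exp (c * of_real z) else 0) has_integral
       of_real A * ((exp (c * of_real 0) - exp (c * of_real (-R))) / c)) {..0}"
    using J by (subst has_integral_restrict) auto
  have pt: "?g 0 z $ 2 $ 1 = (if z \<in> {-R..0} then of_real A * exp (c * of_real z) else 0)"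
    if "z \<in> {..0}" for z
  proof -
    have z: "z \<le> R" using that R by auto
    show ?thesis
    proof (cases "z < -R")
      case True
      then show ?thesis using z row1[OF z]
        by (simp add: integrand1 q0R_def exp_cnj)
    next
      case False
      then have "q0R A B R (- z) = 0" by (simp add: q0R_def)
      then show ?thesis using z row1[OF z] False that
        apply (simp add: integrand1 c_def)
        apply (simp add: mult_ac flip: exp_add)
        apply (rule disjI2)
        apply (rule arg_cong[where f=exp])
        apply (simp add: algebra_simps)
        done
    qed
  qed
  have "((\<lambda>z. ?g 0 z $ 2 $ 1) has_integral
       of_real A * ((exp (c * of_real 0) - exp (c * of_real (-R))) / c)) {..0}"
    by (rule has_integral_eq[OF _ J2]) (rule pt[symmetric])
  from has_integral_unique[OF I21a this]
  have I21: "I $ 2 $ 1 = of_real A * ((1 - exp (c * of_real (-R))) / c)"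
    by simp
  show "Psi 0 $ 1 $ 1 = 1" "Psi 0 $ 1 $ 2 = 0" using row1[OF R] by simp_all
  show "Psi 0 $ 2 $ 2 = 1" unfolding eq using I22 by (simp add: exp_i_sigma3_eq Nminus_def mat2_mult)
  have e: "exp (c * of_real (-R)) = exp (2 * \<i> * of_real R * (k - of_real B))"
    unfolding c_def by (rule arg_cong[where f=exp]) (simp add: algebra_simps)
  have N21: "(exp_i_sigma3 (- of_real B * of_real 0) ** Nminus A B k) $ 2 $ 1 = - \<i> * of_real A / (2 * (k - of_real B))"
    by (simp add: exp_i_sigma3_eq Nminus_def mat2_mult)
  have s0: "k - of_real B \<noteq> 0" using kB by simp
  have "Psi 0 $ 2 $ 1 = - \<i> * of_real A / (2 * (k - of_real B)) + of_real A * ((1 - exp (2 * \<i> * of_real R * (k - of_real B))) / (-2 * \<i> * (k - of_real B)))"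
    unfolding eq using I21 N21 e by (simp add: c_def)
  also have "\<dots> = - \<i> * of_real A * exp (2 * \<i> * of_real R * (k - of_real B)) / (2 * (k - of_real B))"
    by (rule alg1[OF s0])
  finally show "Psi 0 $ 2 $ 1 = - \<i> * of_real A * exp (2 * \<i> * of_real R * (k - of_real B)) / (2 * (k - of_real B))" .
qed


lemma alg2:
  fixes a E s :: complex assumes "s \<noteq> 0"
  shows "- \<i> * a / (2 * s) - a * ((E - 1) / (2 * \<i> * s)) * (-1) = - \<i> * a * E / (2 * s)"
  using assms by (simp add: field_simps)

lemma Psi2_vals:
  assumes R: "R \<ge> 0" and kB: "k \<noteq> - of_real B"
    and sol: "solves_Psi2 (q0R A B R) A B k Psi"
  shows "Psi 0 $ 2 $ 1 = 0" "Psi 0 $ 2 $ 2 = 1" "Psi 0 $ 1 $ 1 = 1"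
    "Psi 0 $ 1 $ 2 = - \<i> * of_real A * exp (2 * \<i> * of_real R * (k + of_real B)) / (2 * (k + of_real B))"
proof -
  let ?g = "\<lambda>x y. Gplus A B x y k ** (Umat (q0R A B R) y - Uplus A B y) ** Psi y
           ** exp_i_sigma3 ((k + of_real B) * of_real (x - y))"
  have row2: "Psi x $ 2 $ 1 = 0 \<and> Psi x $ 2 $ 2 = exp (- \<i> * (of_real B * of_real x))" if "x \<ge> -R" for x
  proof -
    obtain I where I: "(?g x has_integral I) {x..}"
      and eq: "Psi x = exp_i_sigma3 (of_real B * of_real x) ** Nplus A B k - I"
      using sol unfolding solves_Psi2_def by blast
    have "I $ 2 $ 1 = 0" "I $ 2 $ 2 = 0"
      using that by (auto intro!: integral_entry_zero[OF I] simp: integrand2)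
    then show ?thesis
      unfolding eq by (simp add: exp_i_sigma3_eq Nplus_def mat2_mult)
  qed
  obtain I where I: "(?g 0 has_integral I) {0..}"
    and eq: "Psi 0 = exp_i_sigma3 (of_real B * of_real 0) ** Nplus A B k - I"
    using sol unfolding solves_Psi2_def by blast
  have I11: "I $ 1 $ 1 = 0"
    using R row2 by (auto intro!: integral_entry_zero[OF I] simp: integrand2)
  define c where "c = 2 * \<i> * (k + of_real B)"
  have c0: "c \<noteq> 0" using kB by (simp add: c_def add_eq_0_iff2)
  have bl: "bounded_linear (\<lambda>M::cmat. M $ 1 $ 2)"
    by (rule bounded_linear_compose[OF bounded_linear_vec_nth bounded_linear_vec_nth])
  have I12a: "((\<lambda>z. ?g 0 z $ 1 $ 2) has_integral I $ 1 $ 2) {0..}"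
    using has_integral_linear[OF I bl] by (simp add: o_def)
  have J: "((\<lambda>z. - of_real A * exp (c * of_real z)) has_integral
       - of_real A * ((exp (c * of_real R) - exp (c * of_real 0)) / c)) {0..R}"
    by (rule has_integral_mult_right[OF exp_integral[OF R c0]])
  have J2: "((\<lambda>z. if z \<in> {0..R} then - of_real A * exp (c * of_real z) else 0) has_integral
       - of_real A * ((exp (c * of_real R) - exp (c * of_real 0)) / c)) {0..}"
    using J by (subst has_integral_restrict) auto
  have pt: "?g 0 z $ 1 $ 2 = (if z \<in> {0..R} then - of_real A * exp (c * of_real z) else 0)"
    if "z \<in> {0..}" for z
  proof -
    have z: "z \<ge> -R" using that R by auto
    show ?thesis
    proof (cases "z > R")
      case True
      then show ?thesis using z row2[OF z]
        by (simp add: integrand2 q0R_def)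
    next
      case False
      then have "q0R A B R z = 0" by (simp add: q0R_def)
      then show ?thesis using z row2[OF z] False that
        apply (simp add: integrand2 c_def)
        apply (simp add: mult_ac flip: exp_add)
        apply (rule disjI2)
        apply (rule arg_cong[where f=exp])
        apply (simp add: algebra_simps)
        done
    qed
  qed
  have "((\<lambda>z. ?g 0 z $ 1 $ 2) has_integral
       - of_real A * ((exp (c * of_real R) - exp (c * of_real 0)) / c)) {0..}"
    by (rule has_integral_eq[OF _ J2]) (rule pt[symmetric])
  from has_integral_unique[OF I12a this]
  have I12: "I $ 1 $ 2 = - of_real A * ((exp (c * of_real R) - 1) / c)"
    by simp
  show "Psi 0 $ 2 $ 1 = 0" "Psi 0 $ 2 $ 2 = 1" using row2[of 0] R by simp_all
  show "Psi 0 $ 1 $ 1 = 1" unfolding eq using I11 by (simp add: exp_i_sigma3_eq Nplus_def mat2_mult)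
  have e: "exp (c * of_real R) = exp (2 * \<i> * of_real R * (k + of_real B))"
    unfolding c_def by (rule arg_cong[where f=exp]) (simp add: algebra_simps)
  have N12: "(exp_i_sigma3 (of_real B * of_real 0) ** Nplus A B k) $ 1 $ 2 = - \<i> * of_real A / (2 * (k + of_real B))"
    by (simp add: exp_i_sigma3_eq Nplus_def mat2_mult)
  have s0: "k + of_real B \<noteq> 0" using c0 by (simp add: c_def)
  have "Psi 0 $ 1 $ 2 = - \<i> * of_real A / (2 * (k + of_real B)) - of_real A * ((exp (2 * \<i> * of_real R * (k + of_real B)) - 1) / (2 * \<i> * (k + of_real B))) * (-1)"
    unfolding eq using I12 N12 e by (simp add: c_def)
  also have "\<dots> = - \<i> * of_real A * exp (2 * \<i> * of_real R * (k + of_real B)) / (2 * (k + of_real B))"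
    by (rule alg2[OF s0])
  finally show "Psi 0 $ 1 $ 2 = - \<i> * of_real A * exp (2 * \<i> * of_real R * (k + of_real B)) / (2 * (k + of_real B))" .
qed

lemma alg3:
  fixes a E1 E2 E s t k b :: complex assumes "s \<noteq> 0" "t \<noteq> 0" "s = k - b" "t = k + b"
    "E1 * E2 = E"
  shows "1 * 1 - - \<i> * a * E2 / (2 * t) * (- \<i> * a * E1 / (2 * s)) = 1 + a^2 * E / (4 * (k^2 - b^2))"
proof -
  have st: "k^2 - b^2 = s * t" unfolding assms(3,4) by (simp add: power2_eq_square algebra_simps)
  have "1 * 1 - - \<i> * a * E2 / (2 * t) * (- \<i> * a * E1 / (2 * s)) = 1 + a^2 * (E1 * E2) / (4 * (s * t))"
    using assms(1,2) by (simp add: field_simps power2_eq_square)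
  then show ?thesis unfolding st assms(5) .
qed

theorem proposition4:
  fixes A B R :: real and k :: complex and Psi1 Psi2 :: "real \<Rightarrow> complex^2^2"
  assumes "A > 0" and "R \<ge> 0"
    and "k \<noteq> of_real B" and "k \<noteq> - of_real B"
    and "solves_Psi1 (q0R A B R) A B k Psi1"
    and "solves_Psi2 (q0R A B R) A B k Psi2"
  shows "(Im k \<ge> 0 \<longrightarrow> a1 (Psi1 0) (Psi2 0)
            = 1 + (of_real A)^2 * exp (4 * \<i> * k * of_real R) / (4 * (k^2 - (of_real B)^2)))
       \<and> (Im k \<le> 0 \<longrightarrow> a2 (Psi1 0) (Psi2 0) = 1)
       \<and> (Im k = 0 \<longrightarrow> bfun (Psi1 0) (Psi2 0)
            = - \<i> * of_real A * exp (2 * \<i> * of_real R * (k - of_real B)) / (2 * (k - of_real B)))"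
proof -
  note P1 = Psi1_vals[OF assms(2,3,5)]
  note P2 = Psi2_vals[OF assms(2,4,6)]
  have s0: "k - of_real B \<noteq> 0" using assms(3) by simp
  have t0: "k + of_real B \<noteq> 0" using assms(4) by (simp add: add_eq_0_iff2)
  have E: "exp (2 * \<i> * of_real R * (k - of_real B)) * exp (2 * \<i> * of_real R * (k + of_real B))
      = exp (4 * \<i> * k * of_real R)"
    by (simp flip: exp_add) (rule arg_cong[where f=exp], simp add: algebra_simps)
  have "a1 (Psi1 0) (Psi2 0) = 1 + (of_real A)^2 * exp (4 * \<i> * k * of_real R) / (4 * (k^2 - (of_real B)^2))"
    unfolding a1_def det_cols_eq column_nth P1 P2
    by (rule alg3[OF s0 t0 refl refl E])
  moreover have "a2 (Psi1 0) (Psi2 0) = 1"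
    unfolding a2_def det_cols_eq column_nth P1 P2 by simp
  moreover have "bfun (Psi1 0) (Psi2 0)
            = - \<i> * of_real A * exp (2 * \<i> * of_real R * (k - of_real B)) / (2 * (k - of_real B))"
    unfolding bfun_def det_cols_eq column_nth P1 P2 by simp
  ultimately show ?thesis by blast
qed

end
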